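(* Let $H$ be a set with a metric $d$ and $r\ge3$ an integer. Let $\mathcal{Q}$ be a partition of $[r]=\{1,\dots,r\}$ with $|\mathcal{Q}|\ge2$, fix $0\le\alpha<\beta$, and suppose $\underline h\in H^r$ satisfies $d^{\mathcal{Q}}(\underline h)\le\alpha$ and $d_{\mathcal{Q}}(\underline h)\le\beta$. Then there exists a partition $\mathcal{R}$ of $[r]$, strictly coarser than $\mathcal{Q}$, such that $d^{\mathcal{R}}(\underline h)<3\beta$.
   Context: For $\underline h=(h_1,\dots,h_r)\in H^r$ and $I,J\subset[r]$: $d^I(\underline h)=\max\{d(h_i,h_j):i,j\in I\}$, $d_{I,J}(\underline h)=\min\{d(h_i,h_j):i\in I,j\in J\}$. For a partition $\mathcal{Q}$: $d^{\mathcal{Q}}(\underline h)=\max_{I\in\mathcal{Q}}d^I(\underline h)$, $d_{\mathcal{Q}}(\underline h)=\min\{d_{I,J}(\underline h):I\ne J,\ I,J\in\mathcal{Q}\}$. A partition $\mathcal{R}$ is strictly coarser than $\mathcal{Q}$ if every block of $\mathcal{R}$ is a union of blocks of $\mathcal{Q}$ and $\mathcal{R}$ has fewer blocks than $\mathcal{Q}$. *)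

theory Defs
  imports "HOL-Analysis.Analysis" "HOL-Library.Disjoint_Sets"
begin

text \<open>Tuples h in H^r are functions nat => 'a, only indices in {1..r} matter.\<close>

definition diam_idx :: "(nat \<Rightarrow> 'a::metric_space) \<Rightarrow> nat set \<Rightarrow> real" where
  "diam_idx h I = Max {dist (h i) (h j) | i j. i \<in> I \<and> j \<in> I}"

definition sep_idx :: "(nat \<Rightarrow> 'a::metric_space) \<Rightarrow> nat set \<Rightarrow> nat set \<Rightarrow> real" where
  "sep_idx h I J = Min {dist (h i) (h j) | i j. i \<in> I \<and> j \<in> J}"

definition diam_part :: "(nat \<Rightarrow> 'a::metric_space) \<Rightarrow> nat set set \<Rightarrow> real" where
  "diam_part h Q = Max {diam_idx h I | I. I \<in> Q}"

definition sep_part :: "(nat \<Rightarrow> 'a::metric_space) \<Rightarrow> nat set set \<Rightarrow> real" where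
  "sep_part h Q = Min {sep_idx h I J | I J. I \<in> Q \<and> J \<in> Q \<and> I \<noteq> J}"

definition strictly_coarser :: "nat set set \<Rightarrow> nat set set \<Rightarrow> bool" where
  "strictly_coarser R Q \<longleftrightarrow> (\<forall>B\<in>R. \<exists>S\<subseteq>Q. B = \<Union>S) \<and> card R < card Q"

end

theory Submission
  imports Defs
begin

lemma pairset_eq: "{dist (h i) (h j) | i j. i \<in> I \<and> j \<in> J} = (\<lambda>(i,j). dist (h i) (h j)) ` (I \<times> J)"
  by auto

lemma pairset_fin: "finite I \<Longrightarrow> finite J \<Longrightarrow> finite {dist (h i) (h j) | i j. i \<in> I \<and> j \<in> J}"
  unfolding pairset_eq by simp

lemma diam_idx_ge:
  assumes "finite I" "i \<in> I" "j \<in> I"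
  shows "dist (h i) (h j) \<le> diam_idx h I"
  unfolding diam_idx_def using assms by (intro Max_ge pairset_fin) auto

lemma diam_idx_le:
  assumes "finite I" "I \<noteq> {}" "\<And>i j. i \<in> I \<Longrightarrow> j \<in> I \<Longrightarrow> dist (h i) (h j) \<le> c"
  shows "diam_idx h I \<le> c"
proof -
  obtain x where "x \<in> I" using assms(2) by blast
  then have "dist (h x) (h x) \<in> {dist (h i) (h j) | i j. i \<in> I \<and> j \<in> I}" by blast
  then have ne: "{dist (h i) (h j) | i j. i \<in> I \<and> j \<in> I} \<noteq> {}" by blast
  show ?thesis unfolding diam_idx_def using assms(3) pairset_fin[OF assms(1) assms(1)]
    by (subst Max_le_iff[OF _ ne]) auto
qed

lemma sep_idx_wit:
  assumes "finite I" "finite J" "I \<noteq> {}" "J \<noteq> {}"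
  shows "\<exists>i\<in>I. \<exists>j\<in>J. dist (h i) (h j) = sep_idx h I J"
proof -
  have "sep_idx h I J \<in> {dist (h i) (h j) | i j. i \<in> I \<and> j \<in> J}"
    unfolding sep_idx_def using assms by (intro Min_in pairset_fin) auto
  then obtain i j where "i \<in> I" "j \<in> J" "sep_idx h I J = dist (h i) (h j)" by blast
  then show ?thesis by metis
qed

theorem lemma10p1:
  fixes h :: "nat \<Rightarrow> 'a::metric_space" and r :: nat and Q :: "nat set set"
    and \<alpha> \<beta> :: real
  assumes "r \<ge> 3"
    and "partition_on {1..r} Q"
    and "card Q \<ge> 2"
    and "0 \<le> \<alpha>" and "\<alpha> < \<beta>"
    and "diam_part h Q \<le> \<alpha>"
    and "sep_part h Q \<le> \<beta>"
  shows "\<exists>R. partition_on {1..r} R \<and> strictly_coarser R Q \<and> diam_part h R < 3 * \<beta>"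
proof -
  have UQ: "\<Union>Q = {1..r}" and dj: "disjoint Q" and ne: "{} \<notin> Q"
    using assms(2) by (auto simp: partition_on_def)
  have finQ: "finite Q" using UQ by (metis finite_UnionD finite_atLeastAtMost)
  have finB: "\<And>B. B \<in> Q \<Longrightarrow> finite B" using UQ
    by (metis Sup_upper finite_atLeastAtMost finite_subset)
  have dQ: "diam_idx h B \<le> \<alpha>" if "B \<in> Q" for B
  proof -
    have "finite {diam_idx h I | I. I \<in> Q}" using finQ by simp
    then have "diam_idx h B \<le> diam_part h Q" unfolding diam_part_def
      using that by (intro Max_ge) auto
    then show ?thesis using assms(6) by simp
  qed
  have dist_in: "dist (h i) (h j) \<le> \<alpha>" if "B \<in> Q" "i \<in> B" "j \<in> B" for B i j
    using diam_idx_ge[OF finB[OF that(1)] that(2,3), of h] dQ[OF that(1)] by simp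
  obtain I0 J0 where "I0 \<in> Q" "J0 \<in> Q" "I0 \<noteq> J0"
  proof -
    have "\<not> (\<forall>x\<in>Q. \<forall>y\<in>Q. x = y)" using assms(3) card_le_Suc0_iff_eq[OF finQ] by auto
    then show ?thesis using that by blast
  qed
  have S: "finite {sep_idx h I J | I J. I \<in> Q \<and> J \<in> Q \<and> I \<noteq> J}"
  proof -
    have "{sep_idx h I J | I J. I \<in> Q \<and> J \<in> Q \<and> I \<noteq> J} \<subseteq> (\<lambda>(I,J). sep_idx h I J) ` (Q \<times> Q)"
      by auto
    then show ?thesis using finQ by (meson finite_SigmaI finite_imageI finite_subset)
  qed
  have "sep_part h Q \<in> {sep_idx h I J | I J. I \<in> Q \<and> J \<in> Q \<and> I \<noteq> J}"
    unfolding sep_part_def using S \<open>I0 \<in> Q\<close> \<open>J0 \<in> Q\<close> \<open>I0 \<noteq> J0\<close> by (intro Min_in) auto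
  then obtain I J where IJ: "I \<in> Q" "J \<in> Q" "I \<noteq> J" "sep_idx h I J \<le> \<beta>"
  proof -
    from \<open>sep_part h Q \<in> _\<close> obtain I J where "I \<in> Q" "J \<in> Q" "I \<noteq> J" "sep_part h Q = sep_idx h I J"
      by blast
    then show ?thesis using that assms(7) by simp
  qed
  obtain i j where ij: "i \<in> I" "j \<in> J" "dist (h i) (h j) \<le> \<beta>"
  proof -
    have "I \<noteq> {}" "J \<noteq> {}" using ne IJ by auto
    then obtain i j where "i \<in> I" "j \<in> J" "dist (h i) (h j) = sep_idx h I J"
      using sep_idx_wit[of I J h] finB IJ by blast
    then show ?thesis using that IJ(4) by simp
  qed
  define R where "R = insert (I \<union> J) (Q - {I, J})"
  have part: "partition_on {1..r} R"
    unfolding partition_on_def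
  proof (intro conjI)
    show "\<Union>R = {1..r}" using UQ IJ unfolding R_def by blast
    show "{} \<notin> R" using ne IJ unfolding R_def by auto
    show "disjoint R" unfolding disjoint_def R_def
    proof (intro ballI impI)
      fix A B assume A: "A \<in> insert (I \<union> J) (Q - {I, J})" and B: "B \<in> insert (I \<union> J) (Q - {I, J})"
        and AB: "A \<noteq> B"
      have d: "\<And>X Y. X \<in> Q \<Longrightarrow> Y \<in> Q \<Longrightarrow> X \<noteq> Y \<Longrightarrow> X \<inter> Y = {}"
        using dj unfolding disjoint_def by blast
      show "A \<inter> B = {}"
      proof -
        consider "A = I \<union> J" "B \<in> Q" "B \<noteq> I" "B \<noteq> J" | "B = I \<union> J" "A \<in> Q" "A \<noteq> I" "A \<noteq> J"
          | "A \<in> Q" "B \<in> Q" using A B AB by auto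
        then show ?thesis
        proof cases
          case 1 then show ?thesis using d[of I B] d[of J B] IJ by auto
        next
          case 2 then show ?thesis using d[of A I] d[of A J] IJ by auto
        next
          case 3 then show ?thesis using d AB by auto
        qed
      qed
    qed
  qed
  have coarse: "strictly_coarser R Q"
    unfolding strictly_coarser_def
  proof
    show "\<forall>B\<in>R. \<exists>S\<subseteq>Q. B = \<Union>S"
    proof
      fix B assume "B \<in> R"
      then show "\<exists>S\<subseteq>Q. B = \<Union>S" unfolding R_def
      proof
        assume "B = I \<union> J" then show ?thesis using IJ by (intro exI[of _ "{I,J}"]) auto
      next
        assume "B \<in> Q - {I,J}" then show ?thesis by (intro exI[of _ "{B}"]) auto
      qed
    qed
    have "card R \<le> Suc (card (Q - {I,J}))" unfolding R_def using finQ card_insert_le_m1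
      by (simp add: card_insert_if)
    moreover have "card (Q - {I,J}) = card Q - 2" using IJ finQ by (simp add: card_Diff_subset)
    ultimately show "card R < card Q" using assms(3) by linarith
  qed
  have finR: "finite R" unfolding R_def using finQ by simp
  have dR: "diam_idx h B < 3 * \<beta>" if "B \<in> R" for B
  proof -
    from that consider "B = I \<union> J" | "B \<in> Q" unfolding R_def by auto
    then show ?thesis
    proof cases
      case 2 then show ?thesis using dQ[OF 2] assms(4,5) by linarith
    next
      case 1
      have "diam_idx h B \<le> 2 * \<alpha> + \<beta>"
        unfolding 1
      proof (rule diam_idx_le)
        show "finite (I \<union> J)" using finB IJ by auto
        show "I \<union> J \<noteq> {}" using ij by auto
        fix a b assume a: "a \<in> I \<union> J" and b: "b \<in> I \<union> J"
        have ji: "dist (h j) (h i) \<le> \<beta>" using ij by (simp add: dist_commute)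
        have t: "dist (h a) (h b) \<le> dist (h a) (h x) + dist (h x) (h y) + dist (h y) (h b)" for x y
          by (metis add_mono dist_triangle order_trans order_refl)
        show "dist (h a) (h b) \<le> 2 * \<alpha> + \<beta>"
        proof -
          { assume "a \<in> I" "b \<in> I" then have ?thesis using dist_in[OF IJ(1), of a b] assms(4,5) by linarith }
          moreover
          { assume "a \<in> J" "b \<in> J" then have ?thesis using dist_in[OF IJ(2), of a b] assms(4,5) by linarith }
          moreover
          { assume "a \<in> I" "b \<in> J"
            then have ?thesis using t[of i j] dist_in[OF IJ(1) \<open>a\<in>I\<close> ij(1)]
                dist_in[OF IJ(2) ij(2) \<open>b\<in>J\<close>] ij(3) by linarith }
          moreover
          { assume "a \<in> J" "b \<in> I"
            then have ?thesis using t[of j i] dist_in[OF IJ(2) \<open>a\<in>J\<close> ij(2)]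
                dist_in[OF IJ(1) ij(1) \<open>b\<in>I\<close>] ji by linarith }
          ultimately show ?thesis using a b by blast
        qed
      qed
      then show ?thesis using assms(4,5) by linarith
    qed
  qed
  have "diam_part h R < 3 * \<beta>"
    unfolding diam_part_def using finR dR by (subst Max_less_iff) (auto simp: R_def)
  then show ?thesis using part coarse by blast
qed

end
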